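(* Let $A$ be an invertible doubly nonnegative matrix and let $W=[w_{ij}]$ be its sign change matrix. If a row (respectively, column) of $W$ contains no entry greater than $4$ and at most $M$ entries greater than $2$, then the critical exponent of every entry in the corresponding row (respectively, column) of $A$ is at most $M+1$.
   Context: A real matrix is doubly nonnegative if it is symmetric, positive semidefinite, and entry-wise nonnegative. Write $A=UDU^T$ with $U=[u_{ij}]$ real orthogonal and $D=\mathrm{diag}(\lambda_1,\dots,\lambda_n)$, $\lambda_1\ge\cdots\ge\lambda_n>0$; for real $t\ge 0$, $A^t=UD^tU^T$ (so $A^0=I_n$), and $(A^t)_{ij}=\sum_k u_{ik}u_{jk}\lambda_k^t$. The sign change matrix $W$ has $w_{ij}$ equal to the number of sign changes in the coefficient sequence $(u_{i1}u_{j1},\dots,u_{in}u_{jn})$, arranged in decreasing order of the corresponding eigenvalues (zeros ignored). The critical exponent of the $i,j$-entry of $A$ is the least $m\ge 0$ such that $(A^t)_{ij}\ge 0$ for all $t\ge m$. *)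

theory Defs
  imports "Jordan_Normal_Form.Matrix" "Jordan_Normal_Form.Determinant"
begin

definition doubly_nonnegative :: "nat \<Rightarrow> real mat \<Rightarrow> bool" where
  "doubly_nonnegative n A \<longleftrightarrow>
     A \<in> carrier_mat n n \<and> transpose_mat A = A \<and>
     (\<forall>v \<in> carrier_vec n. v \<bullet> (A *\<^sub>v v) \<ge> 0) \<and>
     (\<forall>i<n. \<forall>j<n. A $$ (i,j) \<ge> 0)"

definition real_orthogonal :: "nat \<Rightarrow> real mat \<Rightarrow> bool" where
  "real_orthogonal n U \<longleftrightarrow> U \<in> carrier_mat n n \<and> transpose_mat U * U = 1\<^sub>m n"

definition sign_changes :: "real list \<Rightarrow> nat" where
  "sign_changes xs = (let ys = filter (\<lambda>x. x \<noteq> 0) xs in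
     length (filter (\<lambda>k. ys ! k * ys ! (Suc k) < 0) [0..<length ys - 1]))"

(* sign change matrix entry w_ij for the decomposition A = U D U^T
   (columns of U ordered by decreasing eigenvalue) *)
definition sign_change_entry :: "nat \<Rightarrow> real mat \<Rightarrow> nat \<Rightarrow> nat \<Rightarrow> nat" where
  "sign_change_entry n U i j = sign_changes (map (\<lambda>k. U $$ (i,k) * U $$ (j,k)) [0..<n])"

(* (A^t)_ij = sum_k u_ik u_jk lambda_k^t  for real t \<ge> 0 *)
definition real_power_entry :: "nat \<Rightarrow> real mat \<Rightarrow> (nat \<Rightarrow> real) \<Rightarrow> real \<Rightarrow> nat \<Rightarrow> nat \<Rightarrow> real" where
  "real_power_entry n U lam t i j = (\<Sum>k<n. U $$ (i,k) * U $$ (j,k) * lam k powr t)"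

definition critical_exponent :: "nat \<Rightarrow> real mat \<Rightarrow> (nat \<Rightarrow> real) \<Rightarrow> nat \<Rightarrow> nat \<Rightarrow> real" where
  "critical_exponent n U lam i j =
     (LEAST m::real. m \<ge> 0 \<and> (\<forall>t\<ge>m. real_power_entry n U lam t i j \<ge> 0))"

end

theory Submission
  imports Defs
begin


definition FF :: "nat \<Rightarrow> (nat\<Rightarrow>real) \<Rightarrow> (nat\<Rightarrow>real) \<Rightarrow> real \<Rightarrow> real" where
  "FF n c a x = (\<Sum>k<n. c k * exp (a k * x))"
definition FF' :: "nat \<Rightarrow> (nat\<Rightarrow>real) \<Rightarrow> (nat\<Rightarrow>real) \<Rightarrow> real \<Rightarrow> real" where
  "FF' n c a x = (\<Sum>k<n. c k * a k * exp (a k * x))"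

definition blocks :: "nat \<Rightarrow> (nat \<Rightarrow> real) \<Rightarrow> nat \<Rightarrow> bool" where
 "blocks n c w \<longleftrightarrow> (\<exists>\<beta> \<sigma>. (\<forall>k l. k \<le> l \<and> l < n \<longrightarrow> \<beta> k \<le> \<beta> l) \<and> (\<forall>k<n. \<beta> k \<le> w)
     \<and> (\<forall>m. \<sigma> m = 1 \<or> \<sigma> m = -1) \<and> (\<forall>k<n. 0 \<le> \<sigma> (\<beta> k) * c k))"

lemma FF_deriv: "(FF n c a has_real_derivative FF' n c a x) (at x)"
  unfolding FF_def FF'_def
  by (auto intro!: derivative_eq_intros simp: algebra_simps)

lemma FF_cont: "continuous_on S (FF n c a)"
  unfolding FF_def by (intro continuous_intros)

lemma blocks_base:
  assumes "blocks n c 0" "FF n c a x0 \<noteq> 0"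
  shows "FF n c a x \<noteq> 0"
proof
  assume F0: "FF n c a x = 0"
  obtain \<beta> :: "nat \<Rightarrow> nat" and \<sigma> :: "nat \<Rightarrow> real" where b: "\<forall>k<n. \<beta> k \<le> 0" "\<forall>m. \<sigma> m = 1 \<or> \<sigma> m = -1" "\<forall>k<n. 0 \<le> \<sigma> (\<beta> k) * c k"
    by (insert assms(1), unfold blocks_def, elim exE conjE, rule that, assumption+)
  have s: "0 \<le> \<sigma> 0 * c k" if "k<n" for k
  proof -
    have "\<beta> k = 0" using b(1) that by simp
    thus ?thesis using b(3) that by metis
  qed
  have "\<sigma> 0 * FF n c a x = (\<Sum>k<n. \<sigma> 0 * c k * exp (a k * x))"
    unfolding FF_def by (simp add: sum_distrib_left mult.assoc)
  hence sum0: "(\<Sum>k<n. \<sigma> 0 * c k * exp (a k * x)) = 0" using F0 by simp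
  have nn: "\<forall>k\<in>{..<n}. 0 \<le> \<sigma> 0 * c k * exp (a k * x)" 
    using s by (simp add: lessThan_iff)
  have z: "\<forall>k\<in>{..<n}. \<sigma> 0 * c k * exp (a k * x) = 0"
    using sum_nonneg_eq_0_iff[of "{..<n}" "\<lambda>k. \<sigma> 0 * c k * exp (a k * x)"] sum0 nn by simp
  have "c k = 0" if "k < n" for k
  proof -
    have "\<sigma> 0 \<noteq> 0" using b(2) by (metis zero_neq_neg_one zero_neq_one)
    moreover have "\<sigma> 0 * c k * exp (a k * x) = 0" using z that by blast
    ultimately show ?thesis by simp
  qed
  hence "FF n c a x0 = 0" unfolding FF_def by simp
  thus False using assms(2) by simp
qed

lemma blocks_step:
  assumes bl: "blocks n c (Suc w)" and srt: "\<forall>k l. k \<le> l \<and> l < n \<longrightarrow> a l \<le> a k"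
  shows "blocks n c w \<or> (\<exists>a0. blocks n (\<lambda>k. c k * (a k - a0)) w)"
proof -
  obtain \<beta> :: "nat \<Rightarrow> nat" and \<sigma> :: "nat \<Rightarrow> real" where 
    b: "\<forall>k l. k \<le> l \<and> l < n \<longrightarrow> \<beta> k \<le> \<beta> l" "\<forall>k<n. \<beta> k \<le> Suc w" 
       "\<forall>m. \<sigma> m = 1 \<or> \<sigma> m = -1" "\<forall>k<n. 0 \<le> \<sigma> (\<beta> k) * c k"
    by (insert bl, unfold blocks_def, elim exE conjE, rule that, assumption+)
  show ?thesis
  proof (cases "\<sigma> 0 = \<sigma> 1")
    case True
    have "blocks n c w"
      unfolding blocks_def
    proof (intro exI conjI allI impI)
      show "\<beta> k - 1 \<le> \<beta> l - 1" if "k \<le> l \<and> l < n" for k l using b(1) that by (meson diff_le_mono)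
      show "\<beta> k - 1 \<le> w" if "k < n" for k using b(2) that by (simp add: le_diff_conv)
      show "(\<lambda>m. \<sigma> (Suc m)) m = 1 \<or> (\<lambda>m. \<sigma> (Suc m)) m = -1" for m using b(3) by simp
      show "0 \<le> (\<lambda>m. \<sigma> (Suc m)) (\<beta> k - 1) * c k" if "k < n" for k
      proof (cases "\<beta> k = 0")
        case True thus ?thesis using b(4) that \<open>\<sigma> 0 = \<sigma> 1\<close> by (metis One_nat_def diff_0_eq_0)
      next
        case False thus ?thesis using b(4) that by (metis Suc_diff_1 not_gr_zero)
      qed
    qed
    thus ?thesis by simp
  next
    case False
    hence s1: "\<sigma> 1 = - \<sigma> 0" using b(3) by (metis minus_minus)
    define a0 where "a0 = (if \<exists>k<n. 1 \<le> \<beta> k then a (LEAST k. k < n \<and> 1 \<le> \<beta> k) else a (n - 1))"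
    have lo: "a0 \<le> a k" if "k < n" "\<beta> k = 0" for k
    proof (cases "\<exists>k<n. 1 \<le> \<beta> k")
      case True
      define b0 where "b0 = (LEAST k. k < n \<and> 1 \<le> \<beta> k)"
      have b0: "b0 < n" "1 \<le> \<beta> b0" unfolding b0_def using LeastI_ex[OF True] by auto
      have "k < b0"
      proof (rule ccontr)
        assume "\<not> k < b0" hence "b0 \<le> k" by simp
        hence "\<beta> b0 \<le> \<beta> k" using b(1) that by blast
        thus False using b0 that by simp
      qed
      thus ?thesis using srt b0 True unfolding a0_def b0_def[symmetric] by simp
    next
      case False 
      hence "a0 = a (n - 1)" unfolding a0_def by (simp only: if_not_P[OF False] if_False)
      thus ?thesis using srt that by simp
    qed
    have hi: "a k \<le> a0" if "k < n" "1 \<le> \<beta> k" for k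
    proof -
      have ex: "\<exists>k<n. 1 \<le> \<beta> k" using that by blast
      have "(LEAST k. k < n \<and> 1 \<le> \<beta> k) \<le> k" using that by (simp add: Least_le)
      thus ?thesis using srt that ex unfolding a0_def by simp
    qed
    have "blocks n (\<lambda>k. c k * (a k - a0)) w"
      unfolding blocks_def
    proof (intro exI conjI allI impI)
      show "\<beta> k - 1 \<le> \<beta> l - 1" if "k \<le> l \<and> l < n" for k l using b(1) that by (meson diff_le_mono)
      show "\<beta> k - 1 \<le> w" if "k < n" for k using b(2) that by (simp add: le_diff_conv)
      show "(\<lambda>m. if m = 0 then \<sigma> 0 else - \<sigma> (Suc m)) m = 1 \<or> (\<lambda>m. if m = 0 then \<sigma> 0 else - \<sigma> (Suc m)) m = -1" for m 
        using b(3)[rule_format, of 0] b(3)[rule_format, of "Suc m"] by auto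
      show "0 \<le> (\<lambda>m. if m = 0 then \<sigma> 0 else - \<sigma> (Suc m)) (\<beta> k - 1) * (c k * (a k - a0))" if "k < n" for k
      proof -
        consider "\<beta> k = 0" | "\<beta> k = 1" | "\<beta> k \<ge> 2" by linarith
        thus ?thesis
        proof cases
          case 1
          have "0 \<le> \<sigma> 0 * c k" using b(4) that 1 by metis
          moreover have "0 \<le> a k - a0" using lo[OF that 1] by simp
          ultimately show ?thesis using 1 by (simp add: mult.assoc[symmetric])
        next
          case 2
          have "0 \<le> \<sigma> 1 * c k" using b(4) that 2 by metis
          moreover have "0 \<le> a0 - a k" using hi[OF that] 2 by simp
          ultimately have "0 \<le> (\<sigma> 1 * c k) * (a0 - a k)" by simp
          thus ?thesis using 2 s1 by (simp add: algebra_simps)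
        next
          case 3
          have "0 \<le> \<sigma> (\<beta> k) * c k" using b(4) that by metis
          moreover have "0 \<le> a0 - a k" using hi[OF that] 3 by simp
          ultimately have "0 \<le> (\<sigma> (\<beta> k) * c k) * (a0 - a k)" by simp
          moreover have "Suc (\<beta> k - 1) = \<beta> k" using 3 by simp
          ultimately show ?thesis using 3 by (simp add: algebra_simps)
        qed
      qed
    qed
    thus ?thesis by blast
  qed
qed

lemma FF_shift:
  "FF n (\<lambda>k. c k * (a k - a0)) (\<lambda>k. a k - a0) x = exp (-a0*x) * (FF' n c a x - a0 * FF n c a x)"
proof -
  have e: "exp ((a k - a0) * x) = exp (-a0*x) * exp (a k * x)" for k
    by (simp add: exp_add[symmetric] algebra_simps)
  have "FF n (\<lambda>k. c k * (a k - a0)) (\<lambda>k. a k - a0) x = 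
     (\<Sum>k<n. exp (-a0*x) * (c k * a k * exp (a k * x) - a0 * (c k * exp (a k * x))))"
    unfolding FF_def
  proof (rule sum.cong[OF refl])
    fix k show "c k * (a k - a0) * exp ((a k - a0) * x) =
         exp (- a0 * x) * (c k * a k * exp (a k * x) - a0 * (c k * exp (a k * x)))"
      unfolding e by (simp add: algebra_simps)
  qed
  also have "\<dots> = exp (-a0*x) * (FF' n c a x - a0 * FF n c a x)"
    unfolding FF_def FF'_def by (simp add: sum_distrib_left right_diff_distrib sum_subtractf)
  finally show ?thesis .
qed

lemma g_deriv:
  "((\<lambda>x. exp (-a0*x) * FF n c a x) has_real_derivative
      FF n (\<lambda>k. c k * (a k - a0)) (\<lambda>k. a k - a0) x) (at x)"
proof -
  have 1: "((\<lambda>x. exp (-a0*x)) has_real_derivative exp(-a0*x) * (-a0)) (at x)" 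
    by (auto intro!: derivative_eq_intros)
  have "((\<lambda>x. exp (-a0*x) * FF n c a x) has_real_derivative
      (exp (-a0*x) * (-a0)) * FF n c a x + FF' n c a x * exp (-a0*x)) (at x)"
    by (rule DERIV_mult[OF 1 FF_deriv])
  thus ?thesis unfolding FF_shift by (simp add: algebra_simps)
qed

lemma DZ:
  assumes "\<forall>k l. k \<le> l \<and> l < n \<longrightarrow> a l \<le> a k" "blocks n c w" "FF n c a x0 \<noteq> 0" 
    "finite Z" "D \<subseteq> Z" "\<forall>z\<in>Z. FF n c a z = 0" "\<forall>z\<in>D. FF' n c a z = 0"
  shows "card Z + card D \<le> w"
  using assms
proof (induction w arbitrary: c a Z D x0)
  case 0
  have "Z = {}" using blocks_base[OF "0.prems"(2,3)] "0.prems"(6) by blast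
  thus ?case using "0.prems"(5) by simp
next
  case (Suc w)
  show ?case
  proof (cases "Z = {}")
    case True thus ?thesis using Suc.prems(5) by simp
  next
    case Zne: False
    from blocks_step[OF Suc.prems(2) Suc.prems(1)] 
    consider "blocks n c w" | a0 where "blocks n (\<lambda>k. c k * (a k - a0)) w" 
      by (insert blocks_step[OF Suc.prems(2) Suc.prems(1)], elim disjE exE) (rule that; assumption)+
    thus ?thesis
    proof cases
      case 1
      from Suc.IH[OF Suc.prems(1) 1 Suc.prems(3-7)] show ?thesis by simp
    next
      case 2
      define d where "d = (\<lambda>k. c k * (a k - a0))"
      define b where "b = (\<lambda>k. a k - a0)"
      define g where "g = (\<lambda>x. exp (-a0*x) * FF n c a x)"
      have gder: "(g has_real_derivative FF n d b x) (at x)" for x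
        unfolding g_def d_def b_def by (rule g_deriv)
      have gcont: "continuous_on S g" for S
        unfolding g_def by (intro continuous_intros FF_cont)
      have gz: "g z = 0" if "z \<in> Z" for z using Suc.prems(6) that unfolding g_def by simp
      obtain z0 where z0: "z0 \<in> Z" using Zne by blast
      have nontriv: "\<exists>x1. FF n d b x1 \<noteq> 0"
      proof (rule ccontr)
        assume "\<not> (\<exists>x1. FF n d b x1 \<noteq> 0)"
        hence "\<forall>x. (g has_real_derivative 0) (at x)" using gder by auto
        hence "g x0 = g z0" by (rule DERIV_isconst_all)
        hence "g x0 = 0" using gz[OF z0] by simp
        thus False using Suc.prems(3) unfolding g_def by simp
      qed
      then obtain x1 where x1: "FF n d b x1 \<noteq> 0" by blast
      have bsrt: "\<forall>k l. k \<le> l \<and> l < n \<longrightarrow> b l \<le> b k" using Suc.prems(1) unfolding b_def by auto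
      define nx where "nx = (\<lambda>z. Min {y\<in>Z. z < y})"
      have nx: "nx z \<in> Z \<and> z < nx z \<and> (\<forall>y\<in>Z. z < y \<longrightarrow> nx z \<le> y)" if "z \<in> Z - {Max Z}" for z
      proof -
        have "z \<le> Max Z" using that Suc.prems(4) by simp
        hence "z < Max Z" using that by auto
        hence ne: "{y\<in>Z. z < y} \<noteq> {}" using Max_in[OF Suc.prems(4) Zne] by blast
        have fin: "finite {y\<in>Z. z < y}" using Suc.prems(4) by simp
        show ?thesis unfolding nx_def using Min_in[OF fin ne] Min_le[OF fin] by auto
      qed
      have "\<forall>z\<in>Z - {Max Z}. \<exists>\<xi>. z < \<xi> \<and> \<xi> < nx z \<and> FF n d b \<xi> = 0"
      proof
        fix z assume zz: "z \<in> Z - {Max Z}"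
        have "\<exists>\<xi>. z < \<xi> \<and> \<xi> < nx z \<and> (\<lambda>v. FF n d b \<xi> * v) = (\<lambda>v. 0)"
          apply (rule Rolle_deriv[where f = g])
          using nx[OF zz] gz zz gcont gder by (auto simp: has_field_derivative_def)
        then obtain \<xi> where "z < \<xi> \<and> \<xi> < nx z \<and> (\<lambda>v. FF n d b \<xi> * v) = (\<lambda>v. 0)" by blast
        moreover from this have "FF n d b \<xi> = 0" by (metis mult.right_neutral)
        ultimately show "\<exists>\<xi>. z < \<xi> \<and> \<xi> < nx z \<and> FF n d b \<xi> = 0" by blast
      qed
      from bchoice[OF this] obtain \<xi> where \<xi>: "\<forall>z\<in>Z - {Max Z}. z < \<xi> z \<and> \<xi> z < nx z \<and> FF n d b (\<xi> z) = 0"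
        ..
      have notZ: "\<xi> z \<notin> Z" if "z \<in> Z - {Max Z}" for z
      proof
        assume "\<xi> z \<in> Z"
        hence "nx z \<le> \<xi> z" using nx[OF that] \<xi> that by blast
        moreover have "\<xi> z < nx z" using \<xi> that by blast
        ultimately show False by linarith
      qed
      have inj: "inj_on \<xi> (Z - {Max Z})"
      proof (rule inj_onI)
        fix x y assume xy: "x \<in> Z - {Max Z}" "y \<in> Z - {Max Z}" "\<xi> x = \<xi> y"
        show "x = y"
        proof (rule ccontr)
          assume "x \<noteq> y"
          hence "x < y \<or> y < x" by linarith
          thus False
          proof
            assume "x < y"
            hence "nx x \<le> y" using nx[OF xy(1)] xy(2) by blast
            moreover have "\<xi> x < nx x" "y < \<xi> y" using \<xi> xy by blast+
            ultimately show False using xy(3) by linarith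
          next
            assume "y < x"
            hence "nx y \<le> x" using nx[OF xy(2)] xy(1) by blast
            moreover have "\<xi> y < nx y" "x < \<xi> x" using \<xi> xy by blast+
            ultimately show False using xy(3) by linarith
          qed
        qed
      qed
      define R where "R = \<xi> ` (Z - {Max Z})"
      have cardR: "card R = card Z - 1"
        unfolding R_def using card_image[OF inj] Max_in[OF Suc.prems(4) Zne] Suc.prems(4)
        by (simp add: card_Diff_singleton)
      have disj: "R \<inter> D = {}" unfolding R_def using notZ Suc.prems(5) by blast
      have finRD: "finite (R \<union> D)" unfolding R_def using Suc.prems(4,5) finite_subset by auto
      have zerosRD: "\<forall>z\<in>R \<union> D. FF n d b z = 0"
      proof
        fix z assume "z \<in> R \<union> D"
        thus "FF n d b z = 0"
        proof
          assume "z \<in> R" thus ?thesis unfolding R_def using \<xi> by blast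
        next
          assume zD: "z \<in> D"
          hence "FF n c a z = 0" "FF' n c a z = 0" using Suc.prems(5,6,7) by auto
          thus ?thesis unfolding d_def b_def FF_shift by simp
        qed
      qed
      have "card (R \<union> D) + card ({}::real set) \<le> w"
        apply (rule Suc.IH[of b d x1])
        using bsrt 2 x1 finRD zerosRD unfolding d_def b_def by auto
      hence "card R + card D \<le> w"
        using card_Un_disjoint[OF _ _ disj] finRD by simp
      moreover have "card Z \<ge> 1" using Zne Suc.prems(4) by (simp add: Suc_leI card_gt_0_iff)
      ultimately show ?thesis using cardR by simp
    qed
  qed
qed



fun scf :: "real \<Rightarrow> real list \<Rightarrow> nat" where
  "scf s [] = 0"
| "scf s (x#xs) = (if x = 0 then scf s xs else (if s*x < 0 then 1 else 0) + scf x xs)"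

lemma scf_filter: "scf s (filter (\<lambda>x. x \<noteq> 0) xs) = scf s xs"
  by (induction xs arbitrary: s) auto

lemma L_scf:
  assumes "\<forall>x\<in>set ys. x \<noteq> 0"
  shows "length (filter (\<lambda>k. (y#ys) ! k * (y#ys) ! (Suc k) < 0) [0..<length (y#ys) - 1]) = scf y ys"
  using assms
proof (induction ys arbitrary: y)
  case Nil thus ?case by simp
next
  case (Cons z zs)
  have up: "[0..<length (y#z#zs) - 1] = 0 # map Suc [0..<length (z#zs) - 1]"
    by (simp add: map_Suc_upt upt_conv_Cons del: upt_Suc)
  have "length (filter (\<lambda>k. (y#z#zs) ! k * (y#z#zs) ! (Suc k) < 0) [0..<length (y#z#zs) - 1])
      = (if y * z < 0 then 1 else 0) + length (filter (\<lambda>k. (z#zs) ! k * (z#zs) ! (Suc k) < 0) [0..<length (z#zs) - 1])"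
    unfolding up by (simp add: filter_map o_def)
  also have "\<dots> = (if y * z < 0 then 1 else 0) + scf z zs" using Cons by simp
  finally show ?case using Cons.prems by simp
qed

lemma sign_changes_scf: "sign_changes xs = scf 0 xs"
proof -
  define ys where "ys = filter (\<lambda>x. x \<noteq> 0) xs"
  have "sign_changes xs = length (filter (\<lambda>k. ys ! k * ys ! (Suc k) < 0) [0..<length ys - 1])"
    unfolding sign_changes_def ys_def Let_def by simp
  also have "\<dots> = scf 0 ys"
  proof (cases ys)
    case Nil thus ?thesis by simp
  next
    case (Cons y zs)
    have "y \<noteq> 0" "\<forall>x\<in>set zs. x \<noteq> 0" using Cons unfolding ys_def 
      by (metis (mono_tags) list.set_intros mem_Collect_eq set_filter)+
    thus ?thesis using L_scf[of zs y] Cons by simp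
  qed
  also have "\<dots> = scf 0 xs" unfolding ys_def by (rule scf_filter)
  finally show ?thesis .
qed

lemma mono_shift:
  assumes "\<forall>k l. k \<le> l \<and> l < length xs \<longrightarrow> (\<beta>::nat\<Rightarrow>nat) k \<le> \<beta> l" "e \<le> d"
  shows "\<forall>k l. k \<le> l \<and> l < length (x#xs) \<longrightarrow> (\<lambda>k. if k = 0 then e else \<beta> (k - 1) + d) k \<le> (\<lambda>k. if k = 0 then e else \<beta> (k - 1) + d) l"
proof (intro allI impI)
  fix k l assume kl: "k \<le> l \<and> l < length (x#xs)"
  show "(\<lambda>k. if k = 0 then e else \<beta> (k - 1) + d) k \<le> (\<lambda>k. if k = 0 then e else \<beta> (k - 1) + d) l"
  proof (cases "k = 0")
    case True thus ?thesis using assms(2) by simp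
  next
    case False
    hence "k - 1 \<le> l - 1 \<and> l - 1 < length xs" "l \<noteq> 0" using kl by auto
    hence "\<beta> (k - 1) \<le> \<beta> (l - 1)" using assms(1) by blast
    thus ?thesis using False \<open>l \<noteq> 0\<close> by simp
  qed
qed

lemma sgn_pm: "(s::real) \<noteq> 0 \<Longrightarrow> sgn s = 1 \<or> sgn s = -1"
  by (simp add: sgn_real_def)

lemma list_blocks:
  "\<exists>(\<beta>::nat\<Rightarrow>nat) (\<sigma>::nat\<Rightarrow>real). (\<forall>k l. k \<le> l \<and> l < length xs \<longrightarrow> \<beta> k \<le> \<beta> l) \<and> (\<forall>k<length xs. \<beta> k \<le> scf s xs)
     \<and> (\<forall>m. \<sigma> m = 1 \<or> \<sigma> m = -1) \<and> (\<forall>k<length xs. 0 \<le> \<sigma> (\<beta> k) * xs!k) \<and> (s \<noteq> 0 \<longrightarrow> \<sigma> 0 = sgn s)"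
proof (induction xs arbitrary: s)
  case Nil
  show ?case
    by (rule exI[of _ "\<lambda>k. 0"], rule exI[of _ "\<lambda>m. if s \<noteq> 0 then sgn s else 1"])
       (auto simp: sgn_real_def)
next
  case (Cons x xs)
  show ?case
  proof (cases "x = 0")
    case True
    obtain \<beta> :: "nat\<Rightarrow>nat" and \<sigma> :: "nat\<Rightarrow>real" where b: "\<forall>k l. k \<le> l \<and> l < length xs \<longrightarrow> \<beta> k \<le> \<beta> l" "\<forall>k<length xs. \<beta> k \<le> scf s xs"
     "\<forall>m. \<sigma> m = 1 \<or> \<sigma> m = -1" "\<forall>k<length xs. 0 \<le> \<sigma> (\<beta> k) * xs!k" "s \<noteq> 0 \<longrightarrow> \<sigma> 0 = sgn s"
      by (insert Cons.IH[of s], elim exE conjE, rule that, assumption+)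
    let ?\<beta> = "\<lambda>k. if k = 0 then 0 else \<beta> (k - 1) + 0"
    have m: "\<forall>k l. k \<le> l \<and> l < length (x#xs) \<longrightarrow> ?\<beta> k \<le> ?\<beta> l"
      by (rule mono_shift[OF b(1)]) simp
    have bd: "\<forall>k<length (x#xs). ?\<beta> k \<le> scf s (x#xs)"
    proof (intro allI impI)
      fix k assume "k < length (x#xs)"
      thus "?\<beta> k \<le> scf s (x#xs)" using b(2) True by (cases k) auto
    qed
    have sg: "\<forall>k<length (x#xs). 0 \<le> \<sigma> (?\<beta> k) * (x#xs)!k"
    proof (intro allI impI)
      fix k assume "k < length (x#xs)"
      thus "0 \<le> \<sigma> (?\<beta> k) * (x#xs)!k" using b(4) True by (cases k) auto
    qed
    show ?thesis apply (rule exI[of _ ?\<beta>], rule exI[of _ \<sigma>]) using m bd sg b(3) b(5) by blast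
  next
    case xnz: False
    obtain \<beta> :: "nat\<Rightarrow>nat" and \<sigma> :: "nat\<Rightarrow>real" where b: "\<forall>k l. k \<le> l \<and> l < length xs \<longrightarrow> \<beta> k \<le> \<beta> l" "\<forall>k<length xs. \<beta> k \<le> scf x xs"
     "\<forall>m. \<sigma> m = 1 \<or> \<sigma> m = -1" "\<forall>k<length xs. 0 \<le> \<sigma> (\<beta> k) * xs!k" "\<sigma> 0 = sgn x"
      by (insert Cons.IH[of x] xnz, elim exE conjE, rule that, assumption+, simp)
    have sx: "0 \<le> sgn x * x" by (simp add: sgn_real_def)
    show ?thesis
    proof (cases "s * x < 0")
      case False
      let ?\<beta> = "\<lambda>k. if k = 0 then 0 else \<beta> (k - 1) + 0"
      have m: "\<forall>k l. k \<le> l \<and> l < length (x#xs) \<longrightarrow> ?\<beta> k \<le> ?\<beta> l"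
        by (rule mono_shift[OF b(1)]) simp
      have bd: "\<forall>k<length (x#xs). ?\<beta> k \<le> scf s (x#xs)"
      proof (intro allI impI)
        fix k assume "k < length (x#xs)"
        thus "?\<beta> k \<le> scf s (x#xs)" using b(2) False xnz by (cases k) auto
      qed
      have sg: "\<forall>k<length (x#xs). 0 \<le> \<sigma> (?\<beta> k) * (x#xs)!k"
      proof (intro allI impI)
        fix k assume "k < length (x#xs)"
        thus "0 \<le> \<sigma> (?\<beta> k) * (x#xs)!k" using b(4) b(5) sx by (cases k) auto
      qed
      have s0: "s \<noteq> 0 \<longrightarrow> \<sigma> 0 = sgn s"
      proof
        assume "s \<noteq> 0"
        hence "0 < s * x" using False xnz by (simp add: not_less order_le_less)
        hence "sgn s = sgn x" by (simp add: zero_less_mult_iff sgn_real_def) (use xnz in linarith)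
        thus "\<sigma> 0 = sgn s" using b(5) by simp
      qed
      show ?thesis apply (rule exI[of _ ?\<beta>], rule exI[of _ \<sigma>]) using m bd sg b(3) s0 by blast
    next
      case True
      have snz: "s \<noteq> 0" using True by auto
      let ?\<beta> = "\<lambda>k. if k = 0 then 1 else \<beta> (k - 1) + 1"
      let ?\<sigma> = "\<lambda>m. if m = 0 then sgn s else \<sigma> (m - 1)"
      have m: "\<forall>k l. k \<le> l \<and> l < length (x#xs) \<longrightarrow> ?\<beta> k \<le> ?\<beta> l"
        by (rule mono_shift[OF b(1)]) simp
      have bd: "\<forall>k<length (x#xs). ?\<beta> k \<le> scf s (x#xs)"
      proof (intro allI impI)
        fix k assume "k < length (x#xs)"
        thus "?\<beta> k \<le> scf s (x#xs)" using b(2) True xnz by (cases k) auto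
      qed
      have sg: "\<forall>k<length (x#xs). 0 \<le> ?\<sigma> (?\<beta> k) * (x#xs)!k"
      proof (intro allI impI)
        fix k assume "k < length (x#xs)"
        thus "0 \<le> ?\<sigma> (?\<beta> k) * (x#xs)!k" using b(4) b(5) sx by (cases k) auto
      qed
      have pm: "\<forall>m. ?\<sigma> m = 1 \<or> ?\<sigma> m = -1" using b(3) sgn_pm[OF snz] by simp
      show ?thesis apply (rule exI[of _ ?\<beta>], rule exI[of _ ?\<sigma>]) using m bd sg pm snz by simp
    qed
  qed
qed

lemma blocks_of_list:
  "blocks n c (sign_changes (map c [0..<n]))"
proof -
  obtain \<beta> :: "nat\<Rightarrow>nat" and \<sigma> :: "nat\<Rightarrow>real" where b: 
    "\<forall>k l. k \<le> l \<and> l < length (map c [0..<n]) \<longrightarrow> \<beta> k \<le> \<beta> l" 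
    "\<forall>k<length (map c [0..<n]). \<beta> k \<le> scf 0 (map c [0..<n])"
    "\<forall>m. \<sigma> m = 1 \<or> \<sigma> m = -1" "\<forall>k<length (map c [0..<n]). 0 \<le> \<sigma> (\<beta> k) * (map c [0..<n])!k"
    by (insert list_blocks[of "map c [0..<n]" 0], elim exE conjE, rule that, assumption+)
  have b1: "\<forall>k l. k \<le> l \<and> l < n \<longrightarrow> \<beta> k \<le> \<beta> l" using b(1) by simp
  have b2: "\<forall>k<n. \<beta> k \<le> sign_changes (map c [0..<n])" using b(2) unfolding sign_changes_scf by simp
  have b4: "\<forall>k<n. 0 \<le> \<sigma> (\<beta> k) * c k" 
  proof (intro allI impI)
    fix k assume "k < n"
    thus "0 \<le> \<sigma> (\<beta> k) * c k" using b(4)[rule_format, of k] by simp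
  qed
  show ?thesis unfolding blocks_def
    by (rule exI[of _ \<beta>], rule exI[of _ \<sigma>], intro conjI, fact b1, fact b2, fact b(3), fact b4)
qed

lemma blocks_mono: 
  assumes "blocks n c w" "w \<le> w'" shows "blocks n c w'"
proof -
  obtain \<beta> :: "nat\<Rightarrow>nat" and \<sigma> :: "nat\<Rightarrow>real" where b: 
    "\<forall>k l. k \<le> l \<and> l < n \<longrightarrow> \<beta> k \<le> \<beta> l" "\<forall>k<n. \<beta> k \<le> w"
     "\<forall>m. \<sigma> m = 1 \<or> \<sigma> m = -1" "\<forall>k<n. 0 \<le> \<sigma> (\<beta> k) * c k"
    by (insert assms(1), unfold blocks_def, elim exE conjE, rule that, assumption+)
  have b2: "\<forall>k<n. \<beta> k \<le> w'" using b(2) assms(2) by (meson le_trans)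
  show ?thesis unfolding blocks_def
    by (rule exI[of _ \<beta>], rule exI[of _ \<sigma>], intro conjI, fact b(1), fact b2, fact b(3), fact b(4))
qed



abbreviation EE where "EE n U lam t i j \<equiv> real_power_entry n U lam t i j"

context
  fixes n :: nat and A U :: "real mat" and lam :: "nat \<Rightarrow> real"
  assumes dnn: "doubly_nonnegative n A"
    and orth: "real_orthogonal n U"
    and decomp: "A = U * mat_diag n lam * transpose_mat U"
    and pos: "\<forall>k<n. lam k > 0"
begin

lemma Ucar: "U \<in> carrier_mat n n" using orth unfolding real_orthogonal_def by simp

lemma UTU_entry: assumes "k < n" "p < n"
  shows "(\<Sum>l<n. U$$(l,k) * U$$(l,p)) = (if k = p then 1 else 0)"
proof -
  have "(transpose_mat U * U) $$ (k,p) = 1\<^sub>m n $$ (k,p)" using orth unfolding real_orthogonal_def by simp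
  moreover have "(transpose_mat U * U) $$ (k,p) = (\<Sum>l<n. U$$(l,k) * U$$(l,p))"
    using Ucar assms by (simp add: scalar_prod_def atLeast0LessThan)
  ultimately show ?thesis using assms by simp
qed

lemma UUT_entry: assumes "i < n" "j < n"
  shows "(\<Sum>k<n. U$$(i,k) * U$$(j,k)) = (if i = j then 1 else 0)"
proof -
  have "U * transpose_mat U = 1\<^sub>m n"
    using mat_mult_left_right_inverse[of "transpose_mat U" n U] Ucar orth 
    unfolding real_orthogonal_def by simp
  hence "(U * transpose_mat U) $$ (i,j) = 1\<^sub>m n $$ (i,j)" by simp
  moreover have "(U * transpose_mat U) $$ (i,j) = (\<Sum>k<n. U$$(i,k) * U$$(j,k))"
    using Ucar assms by (simp add: scalar_prod_def atLeast0LessThan)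
  ultimately show ?thesis using assms by simp
qed

lemma A_entry: assumes "l < n" "j < n"
  shows "A$$(l,j) = (\<Sum>p<n. U$$(l,p) * lam p * U$$(j,p))"
proof -
  have UD: "U * mat_diag n lam = Matrix.mat n n (\<lambda>(i,j). U $$ (i,j) * lam j)"
    by (rule mat_diag_mult_right[OF Ucar])
  show ?thesis unfolding decomp UD using Ucar assms by (simp add: scalar_prod_def atLeast0LessThan)
qed

lemma A_nonneg: "l < n \<Longrightarrow> j < n \<Longrightarrow> 0 \<le> A$$(l,j)"
  using dnn unfolding doubly_nonnegative_def by blast

lemma E_FF: "EE n U lam t i j = FF n (\<lambda>k. U$$(i,k) * U$$(j,k)) (\<lambda>k. ln (lam k)) t"
  unfolding real_power_entry_def FF_def
proof (rule sum.cong[OF refl])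
  fix k assume "k \<in> {..<n}"
  hence "lam k > 0" using pos by simp
  thus "U $$ (i, k) * U $$ (j, k) * lam k powr t = U $$ (i, k) * U $$ (j, k) * exp (ln (lam k) * t)"
    by (simp add: powr_def mult.commute)
qed

lemma E_step: assumes "i < n" "j < n"
  shows "EE n U lam (t+1) i j = (\<Sum>l<n. EE n U lam t i l * A$$(l,j))"
proof -
  let ?f = "\<lambda>k p. U$$(i,k) * lam k powr t * lam p * U$$(j,p)"
  have "(\<Sum>l<n. EE n U lam t i l * A$$(l,j)) = (\<Sum>l<n. \<Sum>p<n. \<Sum>k<n. ?f k p * (U$$(l,k) * U$$(l,p)))"
    unfolding real_power_entry_def
    by (rule sum.cong[OF refl], simp add: A_entry assms sum_product mult_ac)
  also have "\<dots> = (\<Sum>l<n. \<Sum>k<n. \<Sum>p<n. ?f k p * (U$$(l,k) * U$$(l,p)))"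
    by (rule sum.cong[OF refl], rule sum.swap)
  also have "\<dots> = (\<Sum>k<n. \<Sum>l<n. \<Sum>p<n. ?f k p * (U$$(l,k) * U$$(l,p)))"
    by (rule sum.swap)
  also have "\<dots> = (\<Sum>k<n. \<Sum>p<n. \<Sum>l<n. ?f k p * (U$$(l,k) * U$$(l,p)))"
    by (rule sum.cong[OF refl], rule sum.swap)
  also have "\<dots> = (\<Sum>k<n. \<Sum>p<n. ?f k p * (if k = p then 1 else 0))"
    by (rule sum.cong[OF refl], rule sum.cong[OF refl]) (simp add: sum_distrib_left[symmetric] UTU_entry)
  also have "\<dots> = (\<Sum>k<n. ?f k k)"
    by (rule sum.cong[OF refl]) (simp add: if_distrib cong: if_cong)
  also have "\<dots> = EE n U lam (t+1) i j"
    unfolding real_power_entry_def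
  proof (rule sum.cong[OF refl])
    fix k assume "k \<in> {..<n}"
    hence "lam k > 0" using pos by simp
    thus "?f k k = U $$ (i, k) * U $$ (j, k) * lam k powr (t + 1)"
      by (simp add: powr_add mult_ac)
  qed
  finally show ?thesis by simp
qed

lemma E_zero: assumes "i < n" "j < n" shows "EE n U lam 0 i j = (if i = j then 1 else 0)"
proof -
  have "EE n U lam 0 i j = (\<Sum>k<n. U$$(i,k) * U$$(j,k))"
    unfolding real_power_entry_def by (rule sum.cong[OF refl]) (use pos in fastforce)
  thus ?thesis using UUT_entry[OF assms] by simp
qed

lemma E_nat: assumes "i < n" shows "\<forall>j<n. 0 \<le> EE n U lam (real m) i j"
proof (induction m)
  case 0 thus ?case using E_zero[OF assms] by simp
next
  case (Suc m)
  show ?case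
  proof (intro allI impI)
    fix j assume j: "j < n"
    have "EE n U lam (real (Suc m)) i j = (\<Sum>l<n. EE n U lam (real m) i l * A$$(l,j))"
      using E_step[OF assms j, of "real m"] by (simp add: add.commute)
    also have "\<dots> \<ge> 0" using Suc A_nonneg j by (intro sum_nonneg) simp
    finally show "0 \<le> EE n U lam (real (Suc m)) i j" .
  qed
qed

lemma E_diag: "0 \<le> EE n U lam t i i"
  unfolding real_power_entry_def by (intro sum_nonneg) simp


lemma sorted_ln: assumes "\<forall>k l. k \<le> l \<and> l < n \<longrightarrow> lam l \<le> lam k"
  shows "\<forall>k l. k \<le> l \<and> l < n \<longrightarrow> ln (lam l) \<le> ln (lam k)"
proof (intro allI impI)
  fix k l assume kl: "k \<le> l \<and> l < n"
  hence "lam l \<le> lam k" "0 < lam l" "0 < lam k" using assms pos by auto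
  thus "ln (lam l) \<le> ln (lam k)" by simp
qed

lemma E_cont: "continuous_on S (\<lambda>t. EE n U lam t i j)"
  unfolding E_FF by (rule FF_cont)

lemma E_deriv: "((\<lambda>t. EE n U lam t i j) has_real_derivative FF' n (\<lambda>k. U$$(i,k) * U$$(j,k)) (\<lambda>k. ln (lam k)) t) (at t)"
  unfolding E_FF by (rule FF_deriv)

lemma DZ_E:
  assumes srt: "\<forall>k l. k \<le> l \<and> l < n \<longrightarrow> lam l \<le> lam k"
    and x0: "EE n U lam x0 i j \<noteq> 0" and fin: "finite Z" and DsZ: "D \<subseteq> Z"
    and zs: "\<forall>z\<in>Z. EE n U lam z i j = 0"
    and ds: "\<forall>z\<in>D. FF' n (\<lambda>k. U$$(i,k) * U$$(j,k)) (\<lambda>k. ln (lam k)) z = 0"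
  shows "card Z + card D \<le> sign_change_entry n U i j"
proof -
  have bl: "blocks n (\<lambda>k. U$$(i,k) * U$$(j,k)) (sign_change_entry n U i j)"
    unfolding sign_change_entry_def by (rule blocks_of_list)
  show ?thesis
    by (rule DZ[OF sorted_ln[OF srt] bl _ fin DsZ _ ds, of x0]) (use x0 zs in \<open>simp_all add: E_FF\<close>)
qed

lemma neg_small:
  assumes srt: "\<forall>k l. k \<le> l \<and> l < n \<longrightarrow> lam l \<le> lam k"
    and ij: "i < n" "j < n" "i \<noteq> j" and w: "sign_change_entry n U i j \<le> 2"
    and k: "1 \<le> k" and s: "0 \<le> s" "s < 1"
  shows "0 \<le> EE n U lam (s + real k) i j"
proof (rule ccontr)
  let ?E = "\<lambda>t. EE n U lam t i j"
  assume "\<not> 0 \<le> ?E (s + real k)"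
  hence neg: "?E (s + real k) < 0" by simp
  have ek: "0 \<le> ?E (real k)" "0 \<le> ?E (real k + 1)" 
    using E_nat[OF ij(1), of k] E_nat[OF ij(1), of "Suc k"] ij(2) by (auto simp: add.commute)
  have e0: "?E 0 = 0" using E_zero[OF ij(1,2)] ij(3) by simp
  obtain z0 where z0: "real k \<le> z0" "z0 \<le> s + real k" "?E z0 = 0"
    using IVT2'[of ?E "s + real k" 0 "real k", OF _ _ _ E_cont] neg ek s by auto
  obtain z1 where z1: "s + real k \<le> z1" "z1 \<le> real k + 1" "?E z1 = 0"
    using IVT'[of ?E "s + real k" 0 "real k + 1", OF _ _ _ E_cont] neg ek s by auto
  have "z0 \<noteq> s + real k" "z1 \<noteq> s + real k" using z0 z1 neg by auto
  hence ord: "0 < z0" "z0 < s + real k" "s + real k < z1" using z0 z1 k by auto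
  have "card {0, z0, z1} + card ({}::real set) \<le> sign_change_entry n U i j"
    by (rule DZ_E[OF srt, of "s + real k"]) (use neg e0 z0 z1 in auto)
  moreover have "card {0, z0, z1} = 3" using ord by auto
  ultimately show False using w by simp
qed


lemma neg_once:
  assumes srt: "\<forall>k l. k \<le> l \<and> l < n \<longrightarrow> lam l \<le> lam k"
    and ij: "i < n" "j < n" "i \<noteq> j" and w: "sign_change_entry n U i j \<le> 4"
    and k: "1 \<le> k" "k < k'" and s: "0 \<le> s" "s < 1"
    and nx: "EE n U lam (s + real k) i j < 0" and ny: "EE n U lam (s + real k') i j < 0"
  shows False
proof -
  let ?E = "\<lambda>t. EE n U lam t i j"
  let ?F' = "FF' n (\<lambda>k. U$$(i,k) * U$$(j,k)) (\<lambda>k. ln (lam k))"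
  define x where "x = s + real k"
  define y where "y = s + real k'"
  have nx': "?E x < 0" and ny': "?E y < 0" using nx ny unfolding x_def y_def by auto
  have enat: "0 \<le> ?E (real q)" for q using E_nat[OF ij(1), of q] ij(2) by auto
  have enat1: "0 \<le> ?E (real q + 1)" for q using enat[of "Suc q"] by (simp add: add.commute)
  have e0: "?E 0 = 0" using E_zero[OF ij(1,2)] ij(3) by simp
  obtain z0 where z0: "real k \<le> z0" "z0 \<le> x" "?E z0 = 0"
    using IVT2'[of ?E x 0 "real k", OF _ _ _ E_cont] nx' enat[of k] s unfolding x_def by auto
  obtain m where m: "x \<le> m" "m \<le> real k + 1" "?E m = 0"
    using IVT'[of ?E x 0 "real k + 1", OF _ _ _ E_cont] nx' enat1[of k] s unfolding x_def by auto
  obtain z3 where z3: "y \<le> z3" "z3 \<le> real k' + 1" "?E z3 = 0"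
    using IVT'[of ?E y 0 "real k' + 1", OF _ _ _ E_cont] ny' enat1[of k'] s unfolding y_def by auto
  have "z0 \<noteq> x" "m \<noteq> x" "m \<noteq> y" "z3 \<noteq> y" using z0 m z3 nx' ny' by auto
  moreover have "real k + 1 \<le> y" using k s unfolding y_def by simp
  ultimately have ord: "0 < z0" "z0 < x" "x < m" "m < y" "y < z3" using z0 m z3 k by auto
  show False
  proof (cases "\<exists>m'. x < m' \<and> m' < y \<and> m' \<noteq> m \<and> ?E m' = 0")
    case True
    then obtain m' where m': "x < m'" "m' < y" "m' \<noteq> m" "?E m' = 0" by blast
    have "card {0, z0, m, m', z3} + card ({}::real set) \<le> sign_change_entry n U i j"
      by (rule DZ_E[OF srt, of x]) (use nx' e0 z0 m m' z3 in auto)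
    moreover have "card {0, z0, m, m', z3} = 5" using ord m' by auto
    ultimately show False using w by simp
  next
    case False
    define \<delta> where "\<delta> = min (m - x) (y - m)"
    have dpos: "0 < \<delta>" using ord unfolding \<delta>_def by simp
    have lm: "\<forall>p. \<bar>m - p\<bar> < \<delta> \<longrightarrow> ?E p \<le> ?E m"
    proof (intro allI impI)
      fix p assume "\<bar>m - p\<bar> < \<delta>"
      hence p: "x < p" "p < y" unfolding \<delta>_def by auto
      show "?E p \<le> ?E m"
      proof (rule ccontr)
        assume "\<not> ?E p \<le> ?E m"
        hence pp: "0 < ?E p" using m by simp
        hence pm: "p \<noteq> m" using m by auto
        show False
        proof (cases "p < m")
          case True
          obtain q where q: "x \<le> q" "q \<le> p" "?E q = 0"
            using IVT'[of ?E x 0 p, OF _ _ _ E_cont] nx' pp p by auto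
          have "q \<noteq> x" "q \<noteq> p" using q nx' pp by auto
          hence "x < q \<and> q < y \<and> q \<noteq> m \<and> ?E q = 0" using q p True by auto
          thus False using False by blast
        next
          case False2: False
          obtain q where q: "p \<le> q" "q \<le> y" "?E q = 0"
            using IVT2'[of ?E y 0 p, OF _ _ _ E_cont] ny' pp p by auto
          have "q \<noteq> y" "q \<noteq> p" using q ny' pp by auto
          hence "x < q \<and> q < y \<and> q \<noteq> m \<and> ?E q = 0" using q p False2 pm by auto
          thus False using False by blast
        qed
      qed
    qed
    have dm: "?F' m = 0" by (rule DERIV_local_max[OF E_deriv dpos lm])
    have "card {0, z0, m, z3} + card {m} \<le> sign_change_entry n U i j"
      by (rule DZ_E[OF srt, of x]) (use nx' e0 z0 m z3 dm in auto)
    moreover have "card {0, z0, m, z3} = 4" using ord by auto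
    ultimately show False using w by simp
  qed
qed


lemma row_ok:
  assumes srt: "\<forall>k l. k \<le> l \<and> l < n \<longrightarrow> lam l \<le> lam k"
    and i: "i < n" and w4: "\<forall>j<n. sign_change_entry n U i j \<le> 4"
    and cM: "card {j. j < n \<and> sign_change_entry n U i j > 2} \<le> M"
    and t: "real M + 1 \<le> t" and j0: "j0 < n"
  shows "0 \<le> EE n U lam t i j0"
proof (rule ccontr)
  assume "\<not> 0 \<le> EE n U lam t i j0"
  hence neg: "EE n U lam t i j0 < 0" by simp
  define K where "K = nat \<lfloor>t\<rfloor>"
  define s where "s = t - real K"
  have "int M + 1 \<le> \<lfloor>t\<rfloor>" using t by (simp add: le_floor_iff)
  hence fl: "real M + 1 \<le> of_int \<lfloor>t\<rfloor>" by linarith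
  hence fl0: "0 \<le> \<lfloor>t\<rfloor>" by linarith
  have rK: "real K = of_int \<lfloor>t\<rfloor>" unfolding K_def using fl0 by simp
  have s: "0 \<le> s" "s < 1" unfolding s_def rK by linarith+
  have KM: "M + 1 \<le> K" using fl rK by linarith
  have tK: "t = s + real K" unfolding s_def by simp
  have propag: "\<forall>j<n. 0 \<le> EE n U lam (s + real (k + l)) i j" if "\<forall>j<n. 0 \<le> EE n U lam (s + real k) i j" for k l
  proof (induction l)
    case 0 thus ?case using that by simp
  next
    case (Suc l)
    show ?case
    proof (intro allI impI)
      fix j assume j: "j < n"
      have "EE n U lam (s + real (k + Suc l)) i j = (\<Sum>l'<n. EE n U lam (s + real (k + l)) i l' * A$$(l',j))"
        using E_step[OF i j, of "s + real (k + l)"] by (simp add: ac_simps)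
      also have "\<dots> \<ge> 0" using Suc A_nonneg j by (intro sum_nonneg) simp
      finally show "0 \<le> EE n U lam (s + real (k + Suc l)) i j" .
    qed
  qed
  have bad: "\<exists>j<n. EE n U lam (s + real k) i j < 0" if "k \<le> K" for k
  proof (rule ccontr)
    assume "\<not> (\<exists>j<n. EE n U lam (s + real k) i j < 0)"
    hence "\<forall>j<n. 0 \<le> EE n U lam (s + real k) i j" by (meson not_less)
    from propag[OF this, of "K - k"] have "0 \<le> EE n U lam (s + real K) i j0" using that j0 by simp
    thus False using neg tK by simp
  qed
  have "\<forall>k\<in>{1..K}. \<exists>j. j < n \<and> EE n U lam (s + real k) i j < 0" using bad by auto
  from bchoice[OF this] obtain J where J: "\<forall>k\<in>{1..K}. J k < n \<and> EE n U lam (s + real k) i (J k) < 0" ..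
  define B where "B = {j. j < n \<and> sign_change_entry n U i j > 2}"
  have JB: "J ` {1..K} \<subseteq> B"
  proof
    fix j assume "j \<in> J ` {1..K}"
    then obtain k where k: "k \<in> {1..K}" "j = J k" by blast
    have jn: "j < n" and jneg: "EE n U lam (s + real k) i j < 0" using J k by auto
    have "j \<noteq> i" using jneg E_diag[of "s + real k" i] by auto
    moreover have "\<not> sign_change_entry n U i j \<le> 2"
    proof
      assume "sign_change_entry n U i j \<le> 2"
      from neg_small[OF srt i jn _ this _ s, of k] \<open>j \<noteq> i\<close> k jneg show False by auto
    qed
    ultimately show "j \<in> B" unfolding B_def using jn by simp
  qed
  have inj: "inj_on J {1..K}"
  proof (rule inj_onI, rule ccontr)
    fix k k' assume kk: "k \<in> {1..K}" "k' \<in> {1..K}" "J k = J k'" "k \<noteq> k'"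
    have n0: "EE n U lam (s + real k) i (J k) < 0" "J k < n" using J kk(1) by auto
    have ne: "J k \<noteq> i" "J k < n"
    proof -
      show "J k \<noteq> i" proof assume "J k = i" thus False using n0 E_diag[of "s + real k" i] by simp qed
    qed (use n0 in simp)
    have w: "sign_change_entry n U i (J k) \<le> 4" using w4 ne by simp
    have n1': "EE n U lam (s + real k') i (J k') < 0" using J kk(2) by blast
    have n1: "EE n U lam (s + real k) i (J k) < 0" "EE n U lam (s + real k') i (J k) < 0" 
      using n0(1) n1' kk(3) by simp_all
    show False
    proof (cases "k < k'")
      case True
      show False by (rule neg_once[OF srt i ne(2) ne(1)[symmetric] w _ True s n1]) (use kk in auto)
    next
      case False
      hence "k' < k" using kk by simp
      show False by (rule neg_once[OF srt i ne(2) ne(1)[symmetric] w _ \<open>k' < k\<close> s n1(2) n1(1)]) (use kk in auto)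
    qed
  qed
  have "card {1..K} \<le> card B" 
    by (rule card_inj_on_le[OF inj JB]) (simp add: B_def)
  hence "K \<le> M" using cM unfolding B_def by simp
  thus False using KM by simp
qed

end

lemma least_le:
  fixes g :: "real \<Rightarrow> real"
  assumes cont: "continuous_on UNIV g" and M0: "\<forall>t\<ge>M0. 0 \<le> g t" "0 \<le> M0"
  shows "(LEAST m::real. m \<ge> 0 \<and> (\<forall>t\<ge>m. g t \<ge> 0)) \<le> M0"
proof -
  define S where "S = {m::real. m \<ge> 0 \<and> (\<forall>t\<ge>m. g t \<ge> 0)}"
  have M0S: "M0 \<in> S" unfolding S_def using M0 by auto
  have bdd: "bdd_below S" unfolding S_def by (rule bdd_belowI[of _ 0]) auto
  have ne: "S \<noteq> {}" using M0S by auto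
  define m0 where "m0 = Inf S"
  have m0le: "m0 \<le> y" if "y \<in> S" for y unfolding m0_def by (rule cInf_lower[OF that bdd])
  have m00: "0 \<le> m0" unfolding m0_def by (rule cInf_greatest[OF ne]) (auto simp: S_def)
  have gt: "0 \<le> g t" if mt: "m0 < t" for t
  proof -
    obtain m where "m \<in> S" "m < t" using mt cInf_less_iff[OF ne bdd] unfolding m0_def by auto
    thus ?thesis unfolding S_def by auto
  qed
  have eq: "0 \<le> g m0"
  proof (rule ccontr)
    assume "\<not> 0 \<le> g m0"
    hence gn: "g m0 < 0" by simp
    have ic: "isCont g m0" using cont by (simp add: continuous_on_eq_continuous_at)
    obtain d where d: "d > 0" "\<forall>x. x \<noteq> m0 \<and> norm (x - m0) < d \<longrightarrow> norm (g x - g m0) < - g m0"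
      using LIM_D[OF ic[unfolded isCont_def], of "- g m0"] gn by auto
    obtain m where mS: "m \<in> S" "m < m0 + d" using cInf_less_iff[OF ne bdd, of "m0 + d"] d unfolding m0_def by auto
    have "m0 \<le> m" using m0le mS by simp
    hence "g m < 0"
    proof (cases "m = m0")
      case True thus ?thesis using gn by simp
    next
      case False
      hence "norm (g m - g m0) < - g m0" using d(2) mS \<open>m0 \<le> m\<close> by auto
      thus ?thesis by simp
    qed
    moreover have "0 \<le> g m" using mS unfolding S_def by auto
    ultimately show False by simp
  qed
  have m0S: "m0 \<in> S" unfolding S_def using m00 gt eq by (auto simp: order_le_less)
  have "(LEAST m::real. m \<ge> 0 \<and> (\<forall>t\<ge>m. g t \<ge> 0)) = m0"
    by (rule Least_equality) (use m0S m0le in \<open>auto simp: S_def\<close>)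
  thus ?thesis using m0le M0S by simp
qed


lemma sce_sym: "sign_change_entry n U j i = sign_change_entry n U i j"
  unfolding sign_change_entry_def by (simp only: mult.commute)

lemma crit_sym: "critical_exponent n U lam j i = critical_exponent n U lam i j"
  unfolding critical_exponent_def real_power_entry_def by (simp only: mult.commute)

lemma row_crit:
  assumes dnn: "doubly_nonnegative n A"
    and orth: "real_orthogonal n U"
    and decomp: "A = U * mat_diag n lam * transpose_mat U"
    and sorted: "\<forall>k l. k \<le> l \<and> l < n \<longrightarrow> lam l \<le> lam k"
    and pos: "\<forall>k<n. lam k > 0"
    and i: "i < n" and w4: "\<forall>j<n. sign_change_entry n U i j \<le> 4"
    and cM: "card {j. j < n \<and> sign_change_entry n U i j > 2} \<le> M"
    and j: "j < n"
  shows "critical_exponent n U lam i j \<le> real M + 1"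
  unfolding critical_exponent_def
proof (rule least_le)
  show "continuous_on UNIV (\<lambda>t. real_power_entry n U lam t i j)"
    by (rule E_cont[OF dnn orth decomp pos])
  show "\<forall>t\<ge>real M + 1. 0 \<le> real_power_entry n U lam t i j"
  proof (intro allI impI)
    fix t assume t: "real M + 1 \<le> t"
    show "0 \<le> real_power_entry n U lam t i j"
      by (rule row_ok[OF dnn orth decomp pos sorted i w4 cM t j])
  qed
  show "0 \<le> real M + 1" by simp
qed

theorem lemma4p3:
  fixes n M :: nat and A U :: "real mat" and lam :: "nat \<Rightarrow> real"
  assumes dnn: "doubly_nonnegative n A"
    and inv: "det A \<noteq> 0"
    and orth: "real_orthogonal n U"
    and decomp: "A = U * mat_diag n lam * transpose_mat U"
    and sorted: "\<forall>k l. k \<le> l \<and> l < n \<longrightarrow> lam l \<le> lam k"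
    and pos: "\<forall>k<n. lam k > 0"
  shows "\<forall>i<n. ((\<forall>j<n. sign_change_entry n U i j \<le> 4) \<and>
                   card {j. j < n \<and> sign_change_entry n U i j > 2} \<le> M
                 \<longrightarrow> (\<forall>j<n. critical_exponent n U lam i j \<le> real M + 1))
             \<and> ((\<forall>j<n. sign_change_entry n U j i \<le> 4) \<and>
                   card {j. j < n \<and> sign_change_entry n U j i > 2} \<le> M
                 \<longrightarrow> (\<forall>j<n. critical_exponent n U lam j i \<le> real M + 1))"
proof (intro allI impI conjI)
  fix i j assume i: "i < n" and H: "(\<forall>j<n. sign_change_entry n U i j \<le> 4) \<and>
                   card {j. j < n \<and> sign_change_entry n U i j > 2} \<le> M" and j: "j < n"
  show "critical_exponent n U lam i j \<le> real M + 1"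
    by (rule row_crit[OF dnn orth decomp sorted pos i conjunct1[OF H] conjunct2[OF H] j])
next
  fix i j assume i: "i < n" and H: "(\<forall>j<n. sign_change_entry n U j i \<le> 4) \<and>
                   card {j. j < n \<and> sign_change_entry n U j i > 2} \<le> M" and j: "j < n"
  have H1: "\<forall>j<n. sign_change_entry n U i j \<le> 4" using conjunct1[OF H] unfolding sce_sym[where i=i] .
  have H2: "card {j. j < n \<and> sign_change_entry n U i j > 2} \<le> M" using conjunct2[OF H] unfolding sce_sym[where i=i] .
  show "critical_exponent n U lam j i \<le> real M + 1"
    unfolding crit_sym[of n U lam j i] by (rule row_crit[OF dnn orth decomp sorted pos i H1 H2 j])
qed

end
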